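(* Under the utility optimization algorithm described in the context, let $r_a^b(\tau)=\frac1\tau\sum_{t=0}^{\tau-1}R_a^b(t)$. Then $$\liminf_{\tau\to\infty}\sum_{a,b\in\mathcal{N}}U_a^b\big(r_a^b(\tau)\big)\;\ge\;U_{tot}(\vec r^{\,*})-\frac{\tilde B}{V},$$ where $U_{tot}(\vec r^{\,*})=\sum_{a,b}U_a^b(r_a^{b*})$ is the optimal network utility achievable by any control policy satisfying the key and queue dynamics, the key availability constraint and network stability, and $\tilde B=B+N^2\gamma d_{max}\mu_{max}$ with $B=N^2\big(\tfrac32d_{max}^2\mu_{max}^2+R_{max}^2\big)+\tfrac L2(P_{max}+K_{max})^2$.
   Context: Network: a graph $G=(\mathcal{N},\mathcal{L})$ with $N=|\mathcal{N}|$ nodes and $L=|\mathcal{L}|$ directed links $l_{[a,c]}$; $\mathcal{N}_a^{in}$ ($\mathcal{N}_a^{out}$) is the set of nodes with a link into (out of) $a$; $d_{max}=\max_a\max(|\mathcal{N}_a^{in}|,|\mathcal{N}_a^{out}|)$. Time is slotted. Per link: key generated per slot $K_{[a,c]}\le K_{max}$ when $S_{[a,c]}(t)=1$; key consumed $P_{[a,c]}(t)\in[0,P_{max}]$; stored key $E_{[a,c]}(t+1)=E_{[a,c]}(t)-P_{[a,c]}(t)+S_{[a,c]}(t)K_{[a,c]}$, $E(0)=0$, constraint $E_{[a,c]}(t)\ge P_{[a,c]}(t)$; rate $\mu_{[a,c]}(t)=\mu_{[a,c]}(P_{[a,c]}(t))\le\mu_{max}$, $\mu_{[a,c]}(P)\le\delta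 P$ for a constant $\delta>0$, split as $\sum_b\mu^b_{[a,c]}(t)$ over types (type-$b$ = destined to $b$). Queues: $Q_a^b(t+1)=Q_a^b(t)+R_a^b(t)+\sum_{c\in\mathcal{N}_a^{in}}\mu^b_{[c,a]}(t)-\sum_{c\in\mathcal{N}_a^{out}}\mu^b_{[a,c]}(t)$, $Q(0)=0$, admitted data $R_a^b(t)\in[0,R_{max}]$. Stability means $\limsup_{t\to\infty}\frac1t\sum_{\tau<t}\sum_{a,b}Q_a^b(\tau)<\infty$. Utilities $U_a^b$ concave nondecreasing, $\beta=\max_{a,b}(U_a^b)'(0)$. Parameters: $V>0$, $\gamma=R_{max}+d_{max}\mu_{max}$, $\theta_{[a,c]}=\delta\beta V+P_{max}$. Weights $W^b_{[a,c]}(t)=\max(Q_a^b(t)-Q_c^b(t)-\gamma,0)$, $W_{[a,c]}(t)=\max_bW^b_{[a,c]}(t)$. Algorithm, each slot $t$: (1) $S_{[a,c]}(t)=1$ iff $E_{[a,c]}(t)<\theta_{[a,c]}$; (2) $R_a^b(t)\in[0,R_{max}]$ maximizes $VU_a^b(R)-Q_a^b(t)R$; (3) $\vec P(t)$ maximizes $\sum_{l_{[a,c]}}\{\mu_{[a,c]}(P_{[a,c]})W_{[a,c]}(t)+(E_{[a,c]}(t)-\theta_{[a,c]})P_{[a,c]}\}$ subject to $E_{[a,c]}(t)\ge P_{[a,c]}$; (4) for $b^*\in\arg\max_bW^b_{[a,c]}(t)$, if $W^{b^*}_{[a,c]}(t)>0$ set $\mu^{b^*}_{[a,c]}(t)=\mu_{[a,c]}(t)$,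 others zero; (5) update by the dynamics. *)

theory Defs
  imports "HOL-Analysis.Analysis"
begin

text \<open>Nodes are the elements of a finite type 'n; a directed link l_[a,c] is the pair (a,c)
  in the link set Lk.
  Type-b flow allocation on link l at slot t is M b l t.\<close>

definition Nin :: "('n \<times> 'n) set \<Rightarrow> 'n \<Rightarrow> 'n set" where
  "Nin Lk a = {c. (c, a) \<in> Lk}"

definition Nout :: "('n \<times> 'n) set \<Rightarrow> 'n \<Rightarrow> 'n set" where
  "Nout Lk a = {c. (a, c) \<in> Lk}"

definition dmax :: "('n::finite \<times> 'n) set \<Rightarrow> nat" where
  "dmax Lk = Max (range (\<lambda>a. max (card (Nin Lk a)) (card (Nout Lk a))))"

definition gam :: "('n::finite \<times> 'n) set \<Rightarrow> real \<Rightarrow> real \<Rightarrow> real" where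
  "gam Lk Rmax mumax = Rmax + real (dmax Lk) * mumax"

definition theta :: "real \<Rightarrow> real \<Rightarrow> real \<Rightarrow> real \<Rightarrow> real" where
  "theta \<delta> \<beta> V Pmax = \<delta> * \<beta> * V + Pmax"

definition Bconst :: "('n::finite \<times> 'n) set \<Rightarrow> real \<Rightarrow> real \<Rightarrow> real \<Rightarrow> real \<Rightarrow> real" where
  "Bconst Lk Rmax mumax Pmax Kmax =
     real (CARD('n))^2 * (3/2 * real (dmax Lk)^2 * mumax^2 + Rmax^2)
     + real (card Lk) / 2 * (Pmax + Kmax)^2"

definition Btilde :: "('n::finite \<times> 'n) set \<Rightarrow> real \<Rightarrow> real \<Rightarrow> real \<Rightarrow> real \<Rightarrow> real" where
  "Btilde Lk Rmax mumax Pmax Kmax =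
     Bconst Lk Rmax mumax Pmax Kmax
     + real (CARD('n))^2 * gam Lk Rmax mumax * real (dmax Lk) * mumax"

definition key_dyn :: "('n \<times> 'n) set \<Rightarrow> ('n \<times> 'n \<Rightarrow> real) \<Rightarrow> ('n \<times> 'n \<Rightarrow> nat \<Rightarrow> bool)
    \<Rightarrow> ('n \<times> 'n \<Rightarrow> nat \<Rightarrow> real) \<Rightarrow> ('n \<times> 'n \<Rightarrow> nat \<Rightarrow> real) \<Rightarrow> bool" where
  "key_dyn Lk K S E P \<longleftrightarrow>
     (\<forall>l\<in>Lk. E l 0 = 0 \<and>
        (\<forall>t. E l (Suc t) = E l t - P l t + (if S l t then K l else 0)))"

text \<open>Queue dynamics.  Q a b t is the type-b (destined to b) backlog at node a.
  Data of type b that reaches b leaves the network, so Q b b t = 0.\<close>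
definition queue_dyn :: "('n::finite \<times> 'n) set \<Rightarrow> ('n \<Rightarrow> 'n \<Rightarrow> nat \<Rightarrow> real)
    \<Rightarrow> ('n \<Rightarrow> 'n \<times> 'n \<Rightarrow> nat \<Rightarrow> real) \<Rightarrow> ('n \<Rightarrow> 'n \<Rightarrow> nat \<Rightarrow> real) \<Rightarrow> bool" where
  "queue_dyn Lk R M Q \<longleftrightarrow>
     (\<forall>a b. Q a b 0 = 0) \<and> (\<forall>b t. Q b b t = 0) \<and>
     (\<forall>a b t. a \<noteq> b \<longrightarrow>
        Q a b (Suc t) = Q a b t + R a b t + (\<Sum>c\<in>Nin Lk a. M b (c, a) t)
                                          - (\<Sum>c\<in>Nout Lk a. M b (a, c) t))"

definition stable :: "('n::finite \<Rightarrow> 'n \<Rightarrow> nat \<Rightarrow> real) \<Rightarrow> bool" where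
  "stable Q \<longleftrightarrow>
     limsup (\<lambda>t. ereal ((1 / real t) * (\<Sum>\<tau><t. \<Sum>a\<in>UNIV. \<Sum>b\<in>UNIV. Q a b \<tau>))) < \<infinity>"

definition ravg :: "('n \<Rightarrow> 'n \<Rightarrow> nat \<Rightarrow> real) \<Rightarrow> 'n \<Rightarrow> 'n \<Rightarrow> nat \<Rightarrow> real" where
  "ravg R a b \<tau> = (1 / real \<tau>) * (\<Sum>t<\<tau>. R a b t)"

definition feasible_policy ::
  "('n::finite \<times> 'n) set \<Rightarrow> ('n \<times> 'n \<Rightarrow> real) \<Rightarrow> ('n \<times> 'n \<Rightarrow> real \<Rightarrow> real)
   \<Rightarrow> real \<Rightarrow> real
   \<Rightarrow> ('n \<times> 'n \<Rightarrow> nat \<Rightarrow> bool) \<Rightarrow> ('n \<times> 'n \<Rightarrow> nat \<Rightarrow> real) \<Rightarrow> ('n \<times> 'n \<Rightarrow> nat \<Rightarrow> real)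
   \<Rightarrow> ('n \<Rightarrow> 'n \<Rightarrow> nat \<Rightarrow> real) \<Rightarrow> ('n \<Rightarrow> 'n \<times> 'n \<Rightarrow> nat \<Rightarrow> real)
   \<Rightarrow> ('n \<Rightarrow> 'n \<Rightarrow> nat \<Rightarrow> real) \<Rightarrow> bool" where
  "feasible_policy Lk K mu Rmax Pmax S E P R M Q \<longleftrightarrow>
     key_dyn Lk K S E P \<and>
     (\<forall>l\<in>Lk. \<forall>t. 0 \<le> P l t \<and> P l t \<le> Pmax \<and> P l t \<le> E l t) \<and>
     (\<forall>a b t. 0 \<le> R a b t \<and> R a b t \<le> Rmax) \<and>
     (\<forall>l\<in>Lk. \<forall>t. (\<forall>b. 0 \<le> M b l t) \<and> (\<Sum>b\<in>UNIV. M b l t) \<le> mu l (P l t)) \<and>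
     queue_dyn Lk R M Q \<and>
     (\<forall>a b t. 0 \<le> Q a b t) \<and>
     stable Q"

definition achievable ::
  "('n::finite \<times> 'n) set \<Rightarrow> ('n \<times> 'n \<Rightarrow> real) \<Rightarrow> ('n \<times> 'n \<Rightarrow> real \<Rightarrow> real)
   \<Rightarrow> real \<Rightarrow> real \<Rightarrow> ('n \<Rightarrow> 'n \<Rightarrow> real) \<Rightarrow> bool" where
  "achievable Lk K mu Rmax Pmax r \<longleftrightarrow>
     (\<exists>S E P R M Q. feasible_policy Lk K mu Rmax Pmax S E P R M Q \<and>
        (\<forall>a b. (\<lambda>\<tau>. ravg R a b \<tau>) \<longlonglongrightarrow> r a b))"

definition Uopt ::
  "('n::finite \<times> 'n) set \<Rightarrow> ('n \<times> 'n \<Rightarrow> real) \<Rightarrow> ('n \<times> 'n \<Rightarrow> real \<Rightarrow> real)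
   \<Rightarrow> real \<Rightarrow> real \<Rightarrow> ('n \<Rightarrow> 'n \<Rightarrow> real \<Rightarrow> real) \<Rightarrow> real" where
  "Uopt Lk K mu Rmax Pmax U =
     (SUP r\<in>{r. achievable Lk K mu Rmax Pmax r}. \<Sum>a\<in>UNIV. \<Sum>b\<in>UNIV. U a b (r a b))"

definition Wb :: "real \<Rightarrow> ('n \<Rightarrow> 'n \<Rightarrow> nat \<Rightarrow> real) \<Rightarrow> 'n \<Rightarrow> 'n \<times> 'n \<Rightarrow> nat \<Rightarrow> real" where
  "Wb \<gamma> Q b l t = max (Q (fst l) b t - Q (snd l) b t - \<gamma>) 0"

definition Wl :: "real \<Rightarrow> ('n::finite \<Rightarrow> 'n \<Rightarrow> nat \<Rightarrow> real) \<Rightarrow> 'n \<times> 'n \<Rightarrow> nat \<Rightarrow> real" where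
  "Wl \<gamma> Q l t = Max (range (\<lambda>b. Wb \<gamma> Q b l t))"

text \<open>A trajectory generated by the utility optimization algorithm (steps (1)--(5));
  any choice among maximizers is allowed.\<close>
definition algo_run ::
  "('n::finite \<times> 'n) set \<Rightarrow> ('n \<times> 'n \<Rightarrow> real) \<Rightarrow> ('n \<times> 'n \<Rightarrow> real \<Rightarrow> real)
   \<Rightarrow> ('n \<Rightarrow> 'n \<Rightarrow> real \<Rightarrow> real) \<Rightarrow> real \<Rightarrow> real \<Rightarrow> real \<Rightarrow> real \<Rightarrow> real \<Rightarrow> real
   \<Rightarrow> ('n \<times> 'n \<Rightarrow> nat \<Rightarrow> bool) \<Rightarrow> ('n \<times> 'n \<Rightarrow> nat \<Rightarrow> real) \<Rightarrow> ('n \<times> 'n \<Rightarrow> nat \<Rightarrow> real)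
   \<Rightarrow> ('n \<Rightarrow> 'n \<Rightarrow> nat \<Rightarrow> real) \<Rightarrow> ('n \<Rightarrow> 'n \<times> 'n \<Rightarrow> nat \<Rightarrow> real)
   \<Rightarrow> ('n \<Rightarrow> 'n \<Rightarrow> nat \<Rightarrow> real) \<Rightarrow> bool" where
  "algo_run Lk K mu U V \<delta> \<beta> Rmax Pmax mumax S E P R M Q \<longleftrightarrow>
     (let \<gamma> = gam Lk Rmax mumax; \<theta> = theta \<delta> \<beta> V Pmax in
     key_dyn Lk K S E P \<and>
     \<comment> \<open>(1) key generation\<close>
     (\<forall>l\<in>Lk. \<forall>t. S l t \<longleftrightarrow> E l t < \<theta>) \<and>
     \<comment> \<open>(2) admission control\<close>
     (\<forall>a b t. 0 \<le> R a b t \<and> R a b t \<le> Rmax \<and>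
        (\<forall>x\<in>{0..Rmax}. V * U a b x - Q a b t * x \<le> V * U a b (R a b t) - Q a b t * R a b t)) \<and>
     \<comment> \<open>(3) key consumption\<close>
     (\<forall>t. (\<forall>l\<in>Lk. 0 \<le> P l t \<and> P l t \<le> Pmax \<and> P l t \<le> E l t) \<and>
        (\<forall>P'. (\<forall>l\<in>Lk. 0 \<le> P' l \<and> P' l \<le> Pmax \<and> P' l \<le> E l t) \<longrightarrow>
           (\<Sum>l\<in>Lk. mu l (P' l) * Wl \<gamma> Q l t + (E l t - \<theta>) * P' l)
             \<le> (\<Sum>l\<in>Lk. mu l (P l t) * Wl \<gamma> Q l t + (E l t - \<theta>) * P l t))) \<and>
     \<comment> \<open>(4) routing\<close>
     (\<forall>l\<in>Lk. \<forall>t. \<exists>bs. (\<forall>b. Wb \<gamma> Q b l t \<le> Wb \<gamma> Q bs l t) \<and>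
        (\<forall>b. M b l t = (if b = bs \<and> Wb \<gamma> Q bs l t > 0 then mu l (P l t) else 0))) \<and>
     \<comment> \<open>(5) queue update\<close>
     queue_dyn Lk R M Q)"

end

theory Submission
  imports Defs
begin


lemma U_quot_lim:
  fixes u :: "real \<Rightarrow> real"
  assumes "(u has_real_derivative d) (at 0 within {0..})"
  shows "((\<lambda>y. (u y - u 0) / y) \<longlongrightarrow> d) (at_right 0)"
  using assms unfolding has_field_derivative_iff at_within_Ici_at_right by simp

lemma U_deriv_nonneg:
  fixes u :: "real \<Rightarrow> real"
  assumes "(u has_real_derivative d) (at 0 within {0..})" "mono_on {0..} u"
  shows "d \<ge> 0"
proof (rule tendsto_lowerbound[OF U_quot_lim[OF assms(1)]])
  show "\<forall>\<^sub>F x in at_right 0. 0 \<le> (u x - u 0) / x"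
    unfolding eventually_at_right_field
    by (rule exI[of _ 1]) (auto intro!: divide_nonneg_pos mono_onD[OF assms(2)])
qed simp

lemma U_tangent:
  fixes u :: "real \<Rightarrow> real"
  assumes d: "(u has_real_derivative d) (at 0 within {0..})" and c: "concave_on {0..} u" and x: "x \<ge> 0"
  shows "u x \<le> u 0 + d * x"
proof (cases "x = 0")
  case True then show ?thesis by simp
next
  case False
  then have xp: "x > 0" using x by simp
  have "(u x - u 0) / x \<le> d"
  proof (rule tendsto_lowerbound[OF U_quot_lim[OF d]])
    show "\<forall>\<^sub>F y in at_right 0. (u x - u 0) / x \<le> (u y - u 0) / y"
      unfolding eventually_at_right_field
    proof (rule exI[of _ x], intro conjI allI impI)
      fix y :: real assume y0: "0 < y" and y1: "y < x"
      note y = y0 y1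
      define t where "t = y / x"
      have t: "0 \<le> t" "t \<le> 1" using y xp by (auto simp: t_def)
      have "u ((1 - t) *\<^sub>R 0 + t *\<^sub>R x) \<ge> (1 - t) * u 0 + t * u x"
        by (rule concave_onD[OF c t]) (use x in auto)
      moreover have "(1 - t) *\<^sub>R 0 + t *\<^sub>R x = y" using xp by (simp add: t_def)
      ultimately have "u y \<ge> (1 - t) * u 0 + t * u x" by simp
      then have "u y - u 0 \<ge> t * (u x - u 0)" by (simp add: algebra_simps)
      then have "(u y - u 0) / y \<ge> t * (u x - u 0) / y" using y by (simp add: divide_right_mono)
      moreover have "t * (u x - u 0) / y = (u x - u 0) / x" using y xp by (simp add: t_def)
      ultimately show "(u x - u 0) / x \<le> (u y - u 0) / y" by linarith
    qed (use xp in auto)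
  qed simp
  then show ?thesis using xp by (simp add: divide_le_eq algebra_simps)
qed

lemma jensen_avg:
  fixes u :: "real \<Rightarrow> real"
  assumes c: "concave_on {0..} u" and n: "n > 0" and nn: "\<And>t. t < n \<Longrightarrow> f t \<ge> 0"
  shows "(1 / real n) * (\<Sum>t<n. u (f t)) \<le> u ((1 / real n) * (\<Sum>t<n. f t))"
proof -
  have cv: "convex_on {0..} (\<lambda>x. - u x)" using c by (simp add: concave_on_def)
  have "(\<lambda>x. - u x) (\<Sum>i<n. (1 / real n) *\<^sub>R f i) \<le> (\<Sum>i<n. (1 / real n) * (\<lambda>x. - u x) (f i))"
    by (rule convex_on_sum[OF _ _ cv]) (use n nn in auto)
  then show ?thesis by (simp add: sum_negf sum_divide_distrib[symmetric])
qed


lemma Lk_Sigma_out: "Lk = Sigma UNIV (Nout Lk)"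
  by (auto simp: Nout_def)

lemma sum_Lk_out:
  fixes Lk :: "('n::finite \<times> 'n) set" and h :: "'n \<times> 'n \<Rightarrow> real"
  shows "(\<Sum>l\<in>Lk. h l) = (\<Sum>a\<in>UNIV. \<Sum>c\<in>Nout Lk a. h (a, c))"
proof -
  have "(\<Sum>a\<in>UNIV. \<Sum>c\<in>Nout Lk a. h (a, c)) = (\<Sum>l\<in>Sigma UNIV (Nout Lk). h l)"
    by (subst sum.Sigma) auto
  then show ?thesis using Lk_Sigma_out[of Lk] by simp
qed

lemma sum_Nout_if:
  fixes Lk :: "('n::finite \<times> 'n) set"
  shows "(\<Sum>c\<in>Nout Lk a. f c) = (\<Sum>c\<in>UNIV. if (a, c) \<in> Lk then f c else (0::real))"
proof -
  have "Nout Lk a = {c\<in>UNIV. (a, c) \<in> Lk}" by (auto simp: Nout_def)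
  then show ?thesis by (simp add: sum.inter_filter[symmetric])
qed

lemma sum_Nin_if:
  fixes Lk :: "('n::finite \<times> 'n) set"
  shows "(\<Sum>c\<in>Nin Lk a. f c) = (\<Sum>c\<in>UNIV. if (c, a) \<in> Lk then f c else (0::real))"
proof -
  have "Nin Lk a = {c\<in>UNIV. (c, a) \<in> Lk}" by (auto simp: Nin_def)
  then show ?thesis by (simp add: sum.inter_filter[symmetric])
qed

lemma sum_Lk_in:
  fixes Lk :: "('n::finite \<times> 'n) set" and h :: "'n \<times> 'n \<Rightarrow> real"
  shows "(\<Sum>l\<in>Lk. h l) = (\<Sum>c\<in>UNIV. \<Sum>a\<in>Nin Lk c. h (a, c))"
proof -
  have "(\<Sum>c\<in>UNIV. \<Sum>a\<in>Nin Lk c. h (a, c)) = (\<Sum>c\<in>UNIV. \<Sum>a\<in>UNIV. if (a, c) \<in> Lk then h (a, c) else 0)"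
    by (simp add: sum_Nin_if)
  also have "\<dots> = (\<Sum>a\<in>UNIV. \<Sum>c\<in>UNIV. if (a, c) \<in> Lk then h (a, c) else 0)"
    by (rule sum.swap)
  also have "\<dots> = (\<Sum>a\<in>UNIV. \<Sum>c\<in>Nout Lk a. h (a, c))"
    by (simp add: sum_Nout_if)
  finally show ?thesis using sum_Lk_out by metis
qed

lemma flow_rearrange:
  fixes Lk :: "('n::finite \<times> 'n) set" and F :: "'n \<Rightarrow> 'n \<times> 'n \<Rightarrow> real" and Q :: "'n \<Rightarrow> 'n \<Rightarrow> real"
  shows "(\<Sum>l\<in>Lk. \<Sum>b\<in>UNIV. F b l * (Q (fst l) b - Q (snd l) b))
       = (\<Sum>a\<in>UNIV. \<Sum>b\<in>UNIV. Q a b * ((\<Sum>c\<in>Nout Lk a. F b (a, c)) - (\<Sum>c\<in>Nin Lk a. F b (c, a))))"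
proof -
  have "(\<Sum>l\<in>Lk. \<Sum>b\<in>UNIV. F b l * (Q (fst l) b - Q (snd l) b))
      = (\<Sum>l\<in>Lk. \<Sum>b\<in>UNIV. F b l * Q (fst l) b) - (\<Sum>l\<in>Lk. \<Sum>b\<in>UNIV. F b l * Q (snd l) b)"
    by (simp add: right_diff_distrib sum_subtractf)
  also have "(\<Sum>l\<in>Lk. \<Sum>b\<in>UNIV. F b l * Q (fst l) b) = (\<Sum>a\<in>UNIV. \<Sum>b\<in>UNIV. Q a b * (\<Sum>c\<in>Nout Lk a. F b (a, c)))"
    by (subst sum_Lk_out) (simp add: sum_distrib_left sum.swap[of _ "Nout Lk _"] mult.commute)
  also have "(\<Sum>l\<in>Lk. \<Sum>b\<in>UNIV. F b l * Q (snd l) b) = (\<Sum>a\<in>UNIV. \<Sum>b\<in>UNIV. Q a b * (\<Sum>c\<in>Nin Lk a. F b (c, a)))"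
    by (subst sum_Lk_in) (simp add: sum_distrib_left sum.swap[of _ "Nin Lk _"] mult.commute)
  finally show ?thesis by (simp add: right_diff_distrib sum_subtractf)
qed

lemma card_Lk_le:
  fixes Lk :: "('n::finite \<times> 'n) set"
  shows "card Lk \<le> CARD('n) * dmax Lk"
proof -
  have "card Lk = (\<Sum>a\<in>UNIV. card (Nout Lk a))"
    by (subst Lk_Sigma_out) simp
  also have "\<dots> \<le> (\<Sum>a\<in>(UNIV::'n set). dmax Lk)"
  proof (rule sum_mono)
    fix a :: 'n
    have "max (card (Nin Lk a)) (card (Nout Lk a)) \<le> dmax Lk"
      unfolding dmax_def by (rule Max_ge) auto
    then show "card (Nout Lk a) \<le> dmax Lk" by simp
  qed
  finally show ?thesis by simp
qed

lemma card_Nin_le: "card (Nin (Lk::('n::finite \<times> 'n) set) a) \<le> dmax Lk"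
  and card_Nout_le: "card (Nout (Lk::('n::finite \<times> 'n) set) a) \<le> dmax Lk"
proof -
  have "max (card (Nin Lk a)) (card (Nout Lk a)) \<le> dmax Lk"
    unfolding dmax_def by (rule Max_ge) auto
  then show "card (Nin Lk a) \<le> dmax Lk" "card (Nout Lk a) \<le> dmax Lk" by auto
qed


locale alg =
  fixes Lk :: "('n::finite \<times> 'n) set"
    and K :: "'n \<times> 'n \<Rightarrow> real" and mu :: "'n \<times> 'n \<Rightarrow> real \<Rightarrow> real"
    and U :: "'n \<Rightarrow> 'n \<Rightarrow> real \<Rightarrow> real" and dU0 :: "'n \<Rightarrow> 'n \<Rightarrow> real"
    and V \<delta> \<beta> Rmax Pmax Kmax mumax :: real
    and S :: "'n \<times> 'n \<Rightarrow> nat \<Rightarrow> bool" and E P :: "'n \<times> 'n \<Rightarrow> nat \<Rightarrow> real"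
    and R Q :: "'n \<Rightarrow> 'n \<Rightarrow> nat \<Rightarrow> real" and M :: "'n \<Rightarrow> 'n \<times> 'n \<Rightarrow> nat \<Rightarrow> real"
  assumes params: "V > 0" "\<delta> > 0" "Rmax \<ge> 0" "Pmax \<ge> 0" "Kmax \<ge> 0" "mumax \<ge> 0"
    and keygen: "\<forall>l\<in>Lk. 0 \<le> K l \<and> K l \<le> Kmax"
    and rate: "\<forall>l\<in>Lk. \<forall>p\<in>{0..Pmax}. 0 \<le> mu l p \<and> mu l p \<le> mumax \<and> mu l p \<le> \<delta> * p"
    and concave: "\<forall>a b. concave_on {0..} (U a b)"
    and nondecr: "\<forall>a b. mono_on {0..} (U a b)"
    and deriv0: "\<forall>a b. (U a b has_real_derivative dU0 a b) (at 0 within {0..})"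
    and beta: "\<beta> = Max (range (\<lambda>(a, b). dU0 a b))"
    and run: "algo_run Lk K mu U V \<delta> \<beta> Rmax Pmax mumax S E P R M Q"
begin

definition "\<gamma> = gam Lk Rmax mumax"
definition "\<theta> = theta \<delta> \<beta> V Pmax"
abbreviation "d \<equiv> real (dmax Lk)"
definition "W l t = Wl \<gamma> Q l t"
definition "inn a b t = (\<Sum>c\<in>Nin Lk a. M b (c, a) t)"
definition "out a b t = (\<Sum>c\<in>Nout Lk a. M b (a, c) t)"

lemma kd: "\<And>l. l \<in> Lk \<Longrightarrow> E l 0 = 0"
  "\<And>l t. l \<in> Lk \<Longrightarrow> E l (Suc t) = E l t - P l t + (if S l t then K l else 0)"
  using run by (auto simp: algo_run_def key_dyn_def Let_def)

lemma Sdef: "l \<in> Lk \<Longrightarrow> S l t \<longleftrightarrow> E l t < \<theta>"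
  using run by (auto simp: algo_run_def \<theta>_def Let_def)

lemma Rb: "0 \<le> R a b t" "R a b t \<le> Rmax"
  using run by (auto simp: algo_run_def Let_def)

lemma Ropt: "0 \<le> x \<Longrightarrow> x \<le> Rmax \<Longrightarrow> V * U a b x - Q a b t * x \<le> V * U a b (R a b t) - Q a b t * R a b t"
  using run by (auto simp: algo_run_def Let_def)

lemma Pb: "l \<in> Lk \<Longrightarrow> 0 \<le> P l t" "l \<in> Lk \<Longrightarrow> P l t \<le> Pmax" "l \<in> Lk \<Longrightarrow> P l t \<le> E l t"
  using run by (auto simp: algo_run_def Let_def)

lemma Popt: "\<forall>l\<in>Lk. 0 \<le> P' l \<and> P' l \<le> Pmax \<and> P' l \<le> E l t \<Longrightarrow>
   (\<Sum>l\<in>Lk. mu l (P' l) * W l t + (E l t - \<theta>) * P' l)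
             \<le> (\<Sum>l\<in>Lk. mu l (P l t) * W l t + (E l t - \<theta>) * P l t)"
  using run unfolding algo_run_def Let_def W_def \<gamma>_def \<theta>_def by blast

lemma route: "l \<in> Lk \<Longrightarrow> \<exists>bs. (\<forall>b. Wb \<gamma> Q b l t \<le> Wb \<gamma> Q bs l t) \<and>
        (\<forall>b. M b l t = (if b = bs \<and> Wb \<gamma> Q bs l t > 0 then mu l (P l t) else 0))"
  using run unfolding algo_run_def Let_def \<gamma>_def by blast

lemma qd: "queue_dyn Lk R M Q"
  using run by (auto simp: algo_run_def Let_def)

lemma Q0: "Q a b 0 = 0" and Qbb: "Q b b t = 0"
  and Qstep: "a \<noteq> b \<Longrightarrow> Q a b (Suc t) = Q a b t + R a b t + inn a b t - out a b t"
  using qd by (auto simp: queue_dyn_def inn_def out_def)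

lemma gam_nonneg: "\<gamma> \<ge> 0"
  using params by (simp add: \<gamma>_def gam_def)

lemma gam_ge: "\<gamma> \<ge> d * mumax" "\<gamma> \<ge> Rmax" "\<gamma> = Rmax + d * mumax"
  using params by (auto simp: \<gamma>_def gam_def)

lemma dU0_nonneg: "dU0 a b \<ge> 0"
  using U_deriv_nonneg deriv0 nondecr by blast

lemma dU0_le: "dU0 a b \<le> \<beta>"
proof -
  have "(\<lambda>(a, b). dU0 a b) (a, b) \<le> Max (range (\<lambda>(a, b). dU0 a b))"
    by (rule Max_ge) auto
  then show ?thesis using beta by simp
qed

lemma beta_nonneg: "\<beta> \<ge> 0"
  using dU0_nonneg dU0_le order_trans by blast

lemma mu_b: "l \<in> Lk \<Longrightarrow> 0 \<le> p \<Longrightarrow> p \<le> Pmax \<Longrightarrow> 0 \<le> mu l p \<and> mu l p \<le> mumax \<and> mu l p \<le> \<delta> * p"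
  using rate by auto

lemma M_b: "l \<in> Lk \<Longrightarrow> 0 \<le> M b l t \<and> M b l t \<le> mumax"
proof -
  assume l: "l \<in> Lk"
  obtain bs where "\<forall>b. M b l t = (if b = bs \<and> Wb \<gamma> Q bs l t > 0 then mu l (P l t) else 0)"
    using route[OF l] by blast
  then show ?thesis using mu_b[OF l Pb(1)[OF l] Pb(2)[OF l]] params by auto
qed

lemma inn_b: "0 \<le> inn a b t" "inn a b t \<le> d * mumax"
proof -
  show "0 \<le> inn a b t" unfolding inn_def by (rule sum_nonneg) (use M_b in \<open>auto simp: Nin_def\<close>)
  have "inn a b t \<le> (\<Sum>c\<in>Nin Lk a. mumax)" unfolding inn_def
    by (rule sum_mono) (use M_b in \<open>auto simp: Nin_def\<close>)
  also have "\<dots> = card (Nin Lk a) * mumax" by simp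
  also have "\<dots> \<le> d * mumax" using card_Nin_le[of Lk a] params by (simp add: mult_right_mono)
  finally show "inn a b t \<le> d * mumax" .
qed

lemma out_b: "0 \<le> out a b t" "out a b t \<le> d * mumax"
proof -
  show "0 \<le> out a b t" unfolding out_def by (rule sum_nonneg) (use M_b in \<open>auto simp: Nout_def\<close>)
  have "out a b t \<le> (\<Sum>c\<in>Nout Lk a. mumax)" unfolding out_def
    by (rule sum_mono) (use M_b in \<open>auto simp: Nout_def\<close>)
  also have "\<dots> = card (Nout Lk a) * mumax" by simp
  also have "\<dots> \<le> d * mumax" using card_Nout_le[of Lk a] params by (simp add: mult_right_mono)
  finally show "out a b t \<le> d * mumax" .
qed

lemma R_zero: "Q a b t > V * \<beta> \<Longrightarrow> R a b t = 0"
proof (rule ccontr)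
  assume q: "Q a b t > V * \<beta>" and "R a b t \<noteq> 0"
  then have rp: "R a b t > 0" using Rb(1)[of a b t] by linarith
  have "V * U a b 0 - Q a b t * 0 \<le> V * U a b (R a b t) - Q a b t * R a b t"
    by (rule Ropt) (use params in auto)
  moreover have "U a b (R a b t) \<le> U a b 0 + dU0 a b * R a b t"
    by (rule U_tangent) (use deriv0 concave Rb in auto)
  ultimately have "V * U a b 0 + Q a b t * R a b t \<le> V * (U a b 0 + dU0 a b * R a b t)"
    using params by (smt (verit) mult_left_mono)
  then have "0 \<le> (V * dU0 a b - Q a b t) * R a b t"
    by (simp add: algebra_simps)
  moreover have "V * dU0 a b \<le> V * \<beta>" using dU0_le params by simp
  ultimately have "V * dU0 a b - Q a b t < 0" using q by linarith
  then have "(V * dU0 a b - Q a b t) * R a b t < 0" using rp by (rule mult_neg_pos)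
  with \<open>0 \<le> (V * dU0 a b - Q a b t) * R a b t\<close> show False by linarith
qed

end


context alg begin

lemma M_pos: "l \<in> Lk \<Longrightarrow> M b l t \<noteq> 0 \<Longrightarrow> Q (fst l) b t - Q (snd l) b t > \<gamma>"
proof -
  assume l: "l \<in> Lk" and m: "M b l t \<noteq> 0"
  obtain bs where "\<forall>b. M b l t = (if b = bs \<and> Wb \<gamma> Q bs l t > 0 then mu l (P l t) else 0)"
    using route[OF l] by blast
  with m have "b = bs" "Wb \<gamma> Q b l t > 0" by (auto split: if_splits)
  then show ?thesis by (simp add: Wb_def less_max_iff_disj)
qed

lemma sum_ne0: "(\<Sum>c\<in>A. f c) \<noteq> (0::real) \<Longrightarrow> \<exists>c\<in>A. f c \<noteq> 0"
  by (metis sum.neutral)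

lemma Qbounds: "0 \<le> Q a b t \<and> Q a b t \<le> V * \<beta> + \<gamma>"
proof (induction t arbitrary: a b)
  case 0
  then show ?case using Q0 params beta_nonneg gam_nonneg by simp
next
  case (Suc t)
  have vb: "V * \<beta> \<ge> 0" using params beta_nonneg by simp
  show ?case
  proof (cases "a = b")
    case True then show ?thesis using Qbb vb gam_nonneg by simp
  next
    case ab: False
    note st = Qstep[OF ab, of t]
    have lo: "0 \<le> Q a b (Suc t)"
    proof (cases "out a b t = 0")
      case True then show ?thesis using st Suc.IH[of a b] Rb[of a b t] inn_b[of a b t] by simp
    next
      case False
      then obtain c where c: "c \<in> Nout Lk a" "M b (a, c) t \<noteq> 0"
        unfolding out_def using sum_ne0 by blast
      then have "(a, c) \<in> Lk" by (simp add: Nout_def)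
      from M_pos[OF this c(2)] have "Q a b t - Q c b t > \<gamma>" by simp
      then have "Q a b t > \<gamma>" using Suc.IH[of c b] by linarith
      then show ?thesis using st Rb[of a b t] inn_b[of a b t] out_b[of a b t] gam_ge by linarith
    qed
    have hi: "Q a b (Suc t) \<le> V * \<beta> + \<gamma>"
    proof (cases "inn a b t = 0")
      case False
      then obtain c where c: "c \<in> Nin Lk a" "M b (c, a) t \<noteq> 0"
        unfolding inn_def using sum_ne0 by blast
      then have "(c, a) \<in> Lk" by (simp add: Nin_def)
      from M_pos[OF this c(2)] have "Q c b t - Q a b t > \<gamma>" by simp
      then have "Q a b t < V * \<beta>" using Suc.IH[of c b] by linarith
      then show ?thesis using st Rb[of a b t] inn_b[of a b t] out_b[of a b t] gam_ge by linarith
    next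
      case True
      show ?thesis
      proof (cases "Q a b t > V * \<beta>")
        case True
        then have "R a b t = 0" by (rule R_zero)
        then show ?thesis using st \<open>inn a b t = 0\<close> Suc.IH[of a b] out_b[of a b t] by linarith
      next
        case False
        then show ?thesis using st \<open>inn a b t = 0\<close> Rb[of a b t] out_b[of a b t] gam_ge by linarith
      qed
    qed
    from lo hi show ?thesis by simp
  qed
qed

lemma Q_nonneg: "0 \<le> Q a b t" and Q_le: "Q a b t \<le> V * \<beta> + \<gamma>"
  using Qbounds by auto

lemma Wb_ge: "Wb \<gamma> Q b l t \<ge> Q (fst l) b t - Q (snd l) b t - \<gamma>" "Wb \<gamma> Q b l t \<ge> 0"
  by (auto simp: Wb_def)

lemma Wb_le: "Wb \<gamma> Q b l t \<le> V * \<beta>"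
proof -
  have "Q (fst l) b t - Q (snd l) b t - \<gamma> \<le> V * \<beta>"
    using Q_le[of "fst l" b t] Q_nonneg[of "snd l" b t] by linarith
  then show ?thesis using params beta_nonneg by (simp add: Wb_def)
qed

lemma W_ge: "W l t \<ge> Wb \<gamma> Q b l t"
  unfolding W_def Wl_def by (rule Max_ge) auto

lemma W_nonneg: "W l t \<ge> 0"
  using W_ge Wb_ge(2) order_trans by blast

lemma W_le: "W l t \<le> V * \<beta>"
  unfolding W_def Wl_def using Wb_le by (subst Max_le_iff) auto

lemma routing: "l \<in> Lk \<Longrightarrow> (\<Sum>b\<in>UNIV. M b l t * (Q (fst l) b t - Q (snd l) b t)) \<ge> mu l (P l t) * W l t"
proof -
  assume l: "l \<in> Lk"
  obtain bs where bs: "\<forall>b. Wb \<gamma> Q b l t \<le> Wb \<gamma> Q bs l t"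
     and m: "\<forall>b. M b l t = (if b = bs \<and> Wb \<gamma> Q bs l t > 0 then mu l (P l t) else 0)"
    using route[OF l] by blast
  have Weq: "W l t = Wb \<gamma> Q bs l t"
    unfolding W_def Wl_def by (rule Max_eqI) (use bs in auto)
  have mu0: "0 \<le> mu l (P l t)" using mu_b[OF l Pb(1)[OF l] Pb(2)[OF l]] by simp
  show ?thesis
  proof (cases "Wb \<gamma> Q bs l t > 0")
    case True
    then have "(\<Sum>b\<in>UNIV. M b l t * (Q (fst l) b t - Q (snd l) b t))
        = mu l (P l t) * (Q (fst l) bs t - Q (snd l) bs t)"
    proof -
      have Mb: "\<And>b. M b l t = (if b = bs then mu l (P l t) else 0)" using m True by auto
      have "(\<Sum>b\<in>UNIV. M b l t * (Q (fst l) b t - Q (snd l) b t))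
          = (\<Sum>b\<in>UNIV. if b = bs then mu l (P l t) * (Q (fst l) b t - Q (snd l) b t) else 0)"
        by (rule sum.cong) (auto simp: Mb)
      also have "\<dots> = mu l (P l t) * (Q (fst l) bs t - Q (snd l) bs t)"
        by (simp add: sum.delta)
      finally show ?thesis .
    qed
    moreover have "Q (fst l) bs t - Q (snd l) bs t \<ge> Wb \<gamma> Q bs l t"
      using True gam_nonneg unfolding Wb_def by (cases "Q (fst l) bs t - Q (snd l) bs t - \<gamma> \<ge> 0") (auto simp: max_def)
    ultimately show ?thesis using Weq mu0 by (simp add: mult_left_mono)
  next
    case False
    then have "W l t = 0" using Weq Wb_ge(2)[of bs l t] by linarith
    then show ?thesis using m False by simp
  qed
qed

end


context alg begin

lemma E_nonneg: "l \<in> Lk \<Longrightarrow> 0 \<le> E l t"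
  using Pb[of l t] by linarith

lemma link_opt:
  assumes l0: "l0 \<in> Lk" and p: "0 \<le> p" "p \<le> Pmax" "p \<le> E l0 t"
  shows "mu l0 p * W l0 t + (E l0 t - \<theta>) * p \<le> mu l0 (P l0 t) * W l0 t + (E l0 t - \<theta>) * P l0 t"
proof -
  define g where "g l x = mu l x * W l t + (E l t - \<theta>) * x" for l x
  define P' where "P' = (\<lambda>l. P l t)(l0 := p)"
  have "\<forall>l\<in>Lk. 0 \<le> P' l \<and> P' l \<le> Pmax \<and> P' l \<le> E l t"
    using p Pb by (auto simp: P'_def)
  from Popt[OF this] have "(\<Sum>l\<in>Lk. g l (P' l)) \<le> (\<Sum>l\<in>Lk. g l (P l t))"
    by (simp add: g_def)
  moreover have "(\<Sum>l\<in>Lk. g l (P' l)) = g l0 p + (\<Sum>l\<in>Lk - {l0}. g l (P l t))"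
    using l0 by (simp add: sum.remove P'_def)
  moreover have "(\<Sum>l\<in>Lk. g l (P l t)) = g l0 (P l0 t) + (\<Sum>l\<in>Lk - {l0}. g l (P l t))"
    using l0 by (simp add: sum.remove)
  ultimately show ?thesis by (simp add: g_def)
qed

lemma theta_eq: "\<theta> = \<delta> * \<beta> * V + Pmax"
  by (simp add: \<theta>_def theta_def)

lemma link_val:
  assumes l: "l \<in> Lk" and p: "0 \<le> p" "p \<le> Pmax"
  shows "mu l p * W l t + (E l t - \<theta>) * p \<le> mu l (P l t) * W l t + (E l t - \<theta>) * P l t"
proof (cases "E l t \<ge> Pmax")
  case True
  then show ?thesis using p by (intro link_opt[OF l]) auto
next
  case False
  have "0 \<le> mu l 0 * W l t + (E l t - \<theta>) * 0"
    using mu_b[OF l] params W_nonneg by simp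
  also have "\<dots> \<le> mu l (P l t) * W l t + (E l t - \<theta>) * P l t"
    by (rule link_opt[OF l]) (use params E_nonneg[OF l] in auto)
  finally have A: "0 \<le> mu l (P l t) * W l t + (E l t - \<theta>) * P l t" .
  have m: "0 \<le> mu l p" "mu l p \<le> \<delta> * p" using mu_b[OF l p] by auto
  have "mu l p * W l t \<le> \<delta> * p * W l t" using m W_nonneg by (simp add: mult_right_mono)
  also have "\<dots> \<le> \<delta> * p * (V * \<beta>)" using W_le params p by (simp add: mult_left_mono)
  finally have "mu l p * W l t + (E l t - \<theta>) * p \<le> p * (\<delta> * \<beta> * V + E l t - \<theta>)"
    by (simp add: algebra_simps)
  also have "\<dots> \<le> 0" using False p by (intro mult_nonneg_nonpos) (auto simp: theta_eq)
  finally show ?thesis using A by linarith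
qed

lemma energy:
  assumes l: "l \<in> Lk" and pb: "0 \<le> pb" "pb \<le> K l"
  shows "(E l t - \<theta>) * (pb - P l t) \<ge>
    (E l (Suc t) - \<theta>)^2 / 2 - (E l t - \<theta>)^2 / 2 - (Pmax + Kmax)^2 / 2"
proof -
  define G where "G = (if S l t then K l else 0)"
  have Es: "E l (Suc t) = E l t - P l t + G" using kd(2)[OF l] by (simp add: G_def)
  have k: "0 \<le> K l" "K l \<le> Kmax" using keygen l by auto
  have p: "0 \<le> P l t" "P l t \<le> Pmax" using Pb[OF l] by auto
  have g: "0 \<le> G" "G \<le> Kmax" using k by (auto simp: G_def)
  have c1: "(E l t - \<theta>) * (pb - G) \<ge> 0"
  proof (cases "S l t")
    case True
    then have "E l t < \<theta>" "G = K l" using Sdef[OF l] by (auto simp: G_def)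
    then show ?thesis using pb by (intro mult_nonpos_nonpos) auto
  next
    case False
    then have "E l t \<ge> \<theta>" "G = 0" using Sdef[OF l] by (auto simp: G_def)
    then show ?thesis using pb by simp
  qed
  have c2: "(G - P l t)^2 \<le> (Pmax + Kmax)^2"
  proof -
    have "\<bar>G - P l t\<bar> \<le> Pmax + Kmax" using g p by linarith
    then have "\<bar>G - P l t\<bar>^2 \<le> (Pmax + Kmax)^2" by (rule power_mono) simp
    then show ?thesis by simp
  qed
  have "(E l (Suc t) - \<theta>)^2 / 2 - (E l t - \<theta>)^2 / 2 = (E l t - \<theta>) * (G - P l t) + (G - P l t)^2 / 2"
  proof -
    have e: "E l (Suc t) - \<theta> = (E l t - \<theta>) + (G - P l t)" using Es by simp
    have "\<And>x y::real. (x + y)^2 / 2 - x^2 / 2 = x * y + y^2 / 2"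
      by (simp add: power2_sum add_divide_distrib)
    then show ?thesis unfolding e by blast
  qed
  moreover have "(E l t - \<theta>) * (pb - P l t) = (E l t - \<theta>) * (pb - G) + (E l t - \<theta>) * (G - P l t)"
    by (simp add: algebra_simps)
  ultimately show ?thesis using c1 c2 by linarith
qed

lemma sq_diff_le: "0 \<le> (u::real) \<Longrightarrow> 0 \<le> v \<Longrightarrow> (u - v)^2 \<le> u^2 + v^2"
  by (simp add: power2_diff)

lemma sq_sum_le: "((u::real) + v)^2 + v^2 \<le> 2 * u^2 + 3 * v^2"
proof -
  have "0 \<le> (u - v)^2" by simp
  then show ?thesis by (simp add: power2_diff power2_sum)
qed

lemma drift_pt:
  "Q a b (Suc t)^2 / 2 - Q a b t^2 / 2 \<le> Q a b t * (R a b t + inn a b t - out a b t)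
     + (Rmax^2 + 3/2 * d^2 * mumax^2)"
proof (cases "a = b")
  case True then show ?thesis using Qbb by simp
next
  case False
  define x where "x = R a b t + inn a b t - out a b t"
  have y: "0 \<le> R a b t + inn a b t" "R a b t + inn a b t \<le> Rmax + d * mumax"
    using Rb inn_b by (auto intro: add_mono)
  have z: "0 \<le> out a b t" "out a b t \<le> d * mumax" using out_b by auto
  have "x^2 \<le> (R a b t + inn a b t)^2 + (out a b t)^2"
    unfolding x_def using y z by (intro sq_diff_le) auto
  also have "\<dots> \<le> (Rmax + d * mumax)^2 + (d * mumax)^2"
    using y z Rb[of a b t] inn_b[of a b t] by (intro add_mono power_mono) auto
  also have "\<dots> \<le> 2 * Rmax^2 + 3 * d^2 * mumax^2"
    using sq_sum_le[of Rmax "d * mumax"] by (simp add: power_mult_distrib)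
  finally have xb: "x^2 / 2 \<le> Rmax^2 + 3/2 * d^2 * mumax^2" by (simp add: algebra_simps)
  have "Q a b (Suc t)^2 / 2 - Q a b t^2 / 2 = Q a b t * x + x^2 / 2"
  proof -
    have e: "Q a b (Suc t) = Q a b t + x" using Qstep[OF False, of t] by (simp add: x_def)
    have "\<And>q y::real. (q + y)^2 / 2 - q^2 / 2 = q * y + y^2 / 2"
      by (simp add: power2_sum add_divide_distrib)
    then show ?thesis unfolding e by blast
  qed
  then show ?thesis using xb by (simp add: x_def)
qed

end


definition avg :: "nat \<Rightarrow> (nat \<Rightarrow> real) \<Rightarrow> real" where
  "avg T f = (1 / real T) * (\<Sum>s<T. f s)"

locale cmp = alg Lk K mu U dU0 V \<delta> \<beta> Rmax Pmax Kmax mumax S E P R Q M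
  for Lk :: "('n::finite \<times> 'n) set"
    and K :: "'n \<times> 'n \<Rightarrow> real" and mu :: "'n \<times> 'n \<Rightarrow> real \<Rightarrow> real"
    and U :: "'n \<Rightarrow> 'n \<Rightarrow> real \<Rightarrow> real" and dU0 :: "'n \<Rightarrow> 'n \<Rightarrow> real"
    and V \<delta> \<beta> Rmax Pmax Kmax mumax :: real
    and S :: "'n \<times> 'n \<Rightarrow> nat \<Rightarrow> bool" and E P :: "'n \<times> 'n \<Rightarrow> nat \<Rightarrow> real"
    and R Q :: "'n \<Rightarrow> 'n \<Rightarrow> nat \<Rightarrow> real" and M :: "'n \<Rightarrow> 'n \<times> 'n \<Rightarrow> nat \<Rightarrow> real" +
  fixes S' :: "'n \<times> 'n \<Rightarrow> nat \<Rightarrow> bool" and E' P' :: "'n \<times> 'n \<Rightarrow> nat \<Rightarrow> real"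
    and R' Q' :: "'n \<Rightarrow> 'n \<Rightarrow> nat \<Rightarrow> real" and M' :: "'n \<Rightarrow> 'n \<times> 'n \<Rightarrow> nat \<Rightarrow> real"
  assumes feas: "feasible_policy Lk K mu Rmax Pmax S' E' P' R' M' Q'"
begin

lemma kd': "\<And>l. l \<in> Lk \<Longrightarrow> E' l 0 = 0"
  "\<And>l t. l \<in> Lk \<Longrightarrow> E' l (Suc t) = E' l t - P' l t + (if S' l t then K l else 0)"
  using feas by (auto simp: feasible_policy_def key_dyn_def)

lemma P'b: "l \<in> Lk \<Longrightarrow> 0 \<le> P' l t" "l \<in> Lk \<Longrightarrow> P' l t \<le> Pmax" "l \<in> Lk \<Longrightarrow> P' l t \<le> E' l t"
  using feas by (auto simp: feasible_policy_def)

lemma R'b: "0 \<le> R' a b t" "R' a b t \<le> Rmax"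
  using feas by (auto simp: feasible_policy_def)

lemma M'b: "l \<in> Lk \<Longrightarrow> 0 \<le> M' b l t" "l \<in> Lk \<Longrightarrow> (\<Sum>b\<in>UNIV. M' b l t) \<le> mu l (P' l t)"
  using feas by (auto simp: feasible_policy_def)

lemma Q'd: "Q' a b 0 = 0"
  "a \<noteq> b \<Longrightarrow> Q' a b (Suc t) = Q' a b t + R' a b t + (\<Sum>c\<in>Nin Lk a. M' b (c, a) t)
                                          - (\<Sum>c\<in>Nout Lk a. M' b (a, c) t)"
  using feas by (auto simp: feasible_policy_def queue_dyn_def)

lemma Q'_nonneg: "0 \<le> Q' a b t" and Q'_stable: "stable Q'"
  using feas by (auto simp: feasible_policy_def)

lemma E'_sum: "l \<in> Lk \<Longrightarrow> E' l T = (\<Sum>s<T. (if S' l s then K l else 0) - P' l s)"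
  by (induction T) (auto simp: kd')

lemma pbar_b: assumes l: "l \<in> Lk" and T: "T > 0"
  shows "0 \<le> avg T (P' l)" "avg T (P' l) \<le> K l"
proof -
  show "0 \<le> avg T (P' l)" unfolding avg_def using P'b(1)[OF l] by (simp add: sum_nonneg)
  have e0: "0 \<le> E' l T" using P'b[OF l, of T] by linarith
  have "(\<Sum>s<T. P' l s) \<le> (\<Sum>s<T. (if S' l s then K l else 0))"
    using e0 E'_sum[OF l, of T] by (simp add: sum_subtractf)
  also have "\<dots> \<le> (\<Sum>s<T. K l)" by (rule sum_mono) (use keygen l in auto)
  finally have "(\<Sum>s<T. P' l s) \<le> real T * K l" by simp
  then show "avg T (P' l) \<le> K l" unfolding avg_def using T by (simp add: field_simps)
qed

lemma fbar_nonneg: "l \<in> Lk \<Longrightarrow> 0 \<le> avg T (M' b l)"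
  unfolding avg_def using M'b(1) by (simp add: sum_nonneg)

lemma sum_avg: "(\<Sum>b\<in>B. avg T (f b)) = avg T (\<lambda>s. \<Sum>b\<in>B. f b s)"
proof -
  have "(\<Sum>b\<in>B. avg T (f b)) = (1 / real T) * (\<Sum>b\<in>B. \<Sum>s<T. f b s)"
    unfolding avg_def by (rule sum_distrib_left[symmetric])
  also have "(\<Sum>b\<in>B. \<Sum>s<T. f b s) = (\<Sum>s<T. \<Sum>b\<in>B. f b s)"
    by (rule sum.swap)
  finally show ?thesis unfolding avg_def .
qed

lemma fbar_le: "l \<in> Lk \<Longrightarrow> (\<Sum>b\<in>UNIV. avg T (M' b l)) \<le> avg T (\<lambda>s. mu l (P' l s))"
  unfolding sum_avg unfolding avg_def
  by (rule mult_left_mono) (auto intro!: sum_mono M'b(2))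

lemma mubar_le: "l \<in> Lk \<Longrightarrow> T > 0 \<Longrightarrow> avg T (\<lambda>s. mu l (P' l s)) \<le> mumax"
proof -
  assume l: "l \<in> Lk" and T: "T > 0"
  have "(\<Sum>s<T. mu l (P' l s)) \<le> (\<Sum>s<T. mumax)"
    by (rule sum_mono) (use mu_b[OF l] P'b[OF l] in auto)
  then show ?thesis unfolding avg_def using T by (simp add: field_simps)
qed

lemma Q'_sum: "a \<noteq> b \<Longrightarrow> Q' a b T = (\<Sum>s<T. R' a b s + (\<Sum>c\<in>Nin Lk a. M' b (c, a) s)
                                          - (\<Sum>c\<in>Nout Lk a. M' b (a, c) s))"
  by (induction T) (auto simp: Q'd)

lemma conserv:
  assumes ab: "a \<noteq> b" and T: "T > 0"
  shows "(\<Sum>c\<in>Nout Lk a. avg T (M' b (a, c))) - (\<Sum>c\<in>Nin Lk a. avg T (M' b (c, a)))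
       = ravg R' a b T - Q' a b T / real T"
proof -
  have "(\<Sum>c\<in>Nout Lk a. avg T (M' b (a, c))) - (\<Sum>c\<in>Nin Lk a. avg T (M' b (c, a)))
      = avg T (\<lambda>s. (\<Sum>c\<in>Nout Lk a. M' b (a, c) s) - (\<Sum>c\<in>Nin Lk a. M' b (c, a) s))"
    unfolding sum_avg by (simp only: avg_def sum_subtractf right_diff_distrib)
  also have "\<dots> = avg T (R' a b) - Q' a b T / real T"
    unfolding Q'_sum[OF ab] avg_def by (simp add: sum_subtractf sum.distrib diff_divide_distrib add_divide_distrib)
  finally show ?thesis by (simp add: ravg_def avg_def)
qed

lemma link_cmp:
  assumes l: "l \<in> Lk" and T: "T > 0"
  shows "avg T (\<lambda>s. mu l (P' l s)) * W l t + (E l t - \<theta>) * avg T (P' l)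
       \<le> mu l (P l t) * W l t + (E l t - \<theta>) * P l t"
proof -
  define A where "A = mu l (P l t) * W l t + (E l t - \<theta>) * P l t"
  define X where "X = (\<Sum>s<T. mu l (P' l s) * W l t + (E l t - \<theta>) * P' l s)"
  have "X \<le> (\<Sum>s<T. A)" unfolding X_def A_def
    by (rule sum_mono, rule link_val[OF l]) (use P'b[OF l] in auto)
  then have X: "X \<le> real T * A" by simp
  have e: "X = (\<Sum>s<T. mu l (P' l s)) * W l t + (E l t - \<theta>) * (\<Sum>s<T. P' l s)"
    unfolding X_def by (simp add: sum.distrib sum_distrib_left sum_distrib_right)
  have L: "avg T (\<lambda>s. mu l (P' l s)) * W l t + (E l t - \<theta>) * avg T (P' l) = (1 / real T) * X"
    unfolding avg_def e by (simp add: algebra_simps)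
  have "(1 / real T) * X \<le> (1 / real T) * (real T * A)" by (rule mult_left_mono[OF X]) simp
  also have "\<dots> = A" using T by simp
  finally show ?thesis using L A_def by simp
qed

end


context cmp begin

definition "Phi t = (\<Sum>a\<in>UNIV. \<Sum>b\<in>UNIV. (Q a b t)^2) / 2 + (\<Sum>l\<in>Lk. (E l t - \<theta>)^2) / 2"
definition "err T r a b = Q' a b T / real T + \<bar>r a b - ravg R' a b T\<bar>"

lemma Bconst_eq: "Bconst Lk Rmax mumax Pmax Kmax
   = real CARD('n)^2 * (Rmax^2 + 3/2 * d^2 * mumax^2) + real (card Lk) * (Pmax + Kmax)^2 / 2"
  by (simp add: Bconst_def algebra_simps)

lemma slot:
  assumes T: "T > 0" and r: "\<And>a b. 0 \<le> r a b \<and> r a b \<le> Rmax"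
  shows "V * (\<Sum>a\<in>UNIV. \<Sum>b\<in>UNIV. U a b (R a b t)) \<ge>
     V * (\<Sum>a\<in>UNIV. \<Sum>b\<in>UNIV. U a b (r a b)) + Phi (Suc t) - Phi t
     - Bconst Lk Rmax mumax Pmax Kmax - \<gamma> * real (card Lk) * mumax
     - (\<Sum>a\<in>UNIV. \<Sum>b\<in>UNIV. Q a b t * err T r a b)"
proof -
  define c where "c = Rmax^2 + 3/2 * d^2 * mumax^2"
  define SUR where "SUR = (\<Sum>a\<in>UNIV. \<Sum>b\<in>UNIV. U a b (R a b t))"
  define SUr where "SUr = (\<Sum>a\<in>UNIV. \<Sum>b\<in>UNIV. U a b (r a b))"
  define SQR where "SQR = (\<Sum>a\<in>UNIV. \<Sum>b\<in>UNIV. Q a b t * R a b t)"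
  define SQr where "SQr = (\<Sum>a\<in>UNIV. \<Sum>b\<in>UNIV. Q a b t * r a b)"
  define X where "X = (\<Sum>a\<in>UNIV. \<Sum>b\<in>UNIV. Q a b t * (out a b t - inn a b t))"
  define Q2 where "Q2 t' = (\<Sum>a\<in>UNIV. \<Sum>b\<in>UNIV. (Q a b t')^2)" for t'
  define E2 where "E2 t' = (\<Sum>l\<in>Lk. (E l t' - \<theta>)^2)" for t'
  define SE where "SE = (\<Sum>a\<in>UNIV. \<Sum>b\<in>UNIV. Q a b t * err T r a b)"
  define L where "L = real (card Lk)"
  define mb where "mb l = avg T (\<lambda>s. mu l (P' l s))" for l
  define fb where "fb b l = avg T (M' b l)" for b l
  have "(\<Sum>a\<in>UNIV. \<Sum>b\<in>UNIV. V * U a b (r a b) - Q a b t * r a b)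
      \<le> (\<Sum>a\<in>UNIV. \<Sum>b\<in>UNIV. V * U a b (R a b t) - Q a b t * R a b t)"
    by (intro sum_mono Ropt) (use r in auto)
  then have a: "V * SUr - SQr \<le> V * SUR - SQR"
    by (simp add: SUr_def SQr_def SUR_def SQR_def sum_subtractf sum_distrib_left)
  have "(\<Sum>a\<in>UNIV. \<Sum>b\<in>UNIV. Q a b (Suc t)^2 / 2 - Q a b t^2 / 2)
      \<le> (\<Sum>a\<in>UNIV. \<Sum>b\<in>UNIV. Q a b t * R a b t - Q a b t * (out a b t - inn a b t) + c)"
    by (intro sum_mono) (use drift_pt in \<open>simp add: c_def algebra_simps\<close>)
  moreover have "(\<Sum>a\<in>(UNIV::'n set). \<Sum>b\<in>(UNIV::'n set). c) = real CARD('n)^2 * c"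
    by (simp add: power2_eq_square)
  ultimately have b: "Q2 (Suc t) / 2 - Q2 t / 2 \<le> SQR - X + real CARD('n)^2 * c"
    by (simp add: Q2_def SQR_def X_def sum_subtractf sum.distrib sum_divide_distrib power2_eq_square[of "real CARD('n)"])
  have "X = (\<Sum>l\<in>Lk. \<Sum>b\<in>UNIV. M b l t * (Q (fst l) b t - Q (snd l) b t))"
    unfolding X_def out_def inn_def
    by (rule flow_rearrange[where Lk=Lk and F="\<lambda>b l. M b l t" and Q="\<lambda>a b. Q a b t", symmetric])
  also have "\<dots> \<ge> (\<Sum>l\<in>Lk. mu l (P l t) * W l t)"
    by (rule sum_mono) (rule routing)
  finally have cc: "X \<ge> (\<Sum>l\<in>Lk. mu l (P l t) * W l t)" .
  have "(\<Sum>l\<in>Lk. mu l (P l t) * W l t) \<ge>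
     (\<Sum>l\<in>Lk. mb l * W l t + ((E l (Suc t) - \<theta>)^2 / 2 - (E l t - \<theta>)^2 / 2) - (Pmax + Kmax)^2 / 2)"
  proof (rule sum_mono)
    fix l assume l: "l \<in> Lk"
    have "mb l * W l t + (E l t - \<theta>) * avg T (P' l) \<le> mu l (P l t) * W l t + (E l t - \<theta>) * P l t"
      using link_cmp[OF l T] by (simp add: mb_def)
    moreover have "(E l t - \<theta>) * (avg T (P' l) - P l t) \<ge>
      (E l (Suc t) - \<theta>)^2 / 2 - (E l t - \<theta>)^2 / 2 - (Pmax + Kmax)^2 / 2"
      by (rule energy[OF l pbar_b[OF l T]])
    ultimately show "mb l * W l t + ((E l (Suc t) - \<theta>)^2 / 2 - (E l t - \<theta>)^2 / 2) - (Pmax + Kmax)^2 / 2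
       \<le> mu l (P l t) * W l t"
      by (simp add: algebra_simps)
  qed
  then have de: "(\<Sum>l\<in>Lk. mu l (P l t) * W l t) \<ge>
     (\<Sum>l\<in>Lk. mb l * W l t) + E2 (Suc t) / 2 - E2 t / 2 - L * (Pmax + Kmax)^2 / 2"
    by (simp add: E2_def L_def sum.distrib sum_subtractf sum_divide_distrib)
  have "(\<Sum>l\<in>Lk. mb l * W l t) \<ge> (\<Sum>l\<in>Lk. (\<Sum>b\<in>UNIV. fb b l * (Q (fst l) b t - Q (snd l) b t)) - \<gamma> * mumax)"
  proof (rule sum_mono)
    fix l assume l: "l \<in> Lk"
    have f0: "\<And>b. 0 \<le> fb b l" using fbar_nonneg[OF l] by (simp add: fb_def)
    have fs: "(\<Sum>b\<in>UNIV. fb b l) \<le> mb l" using fbar_le[OF l] by (simp add: fb_def mb_def)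
    have mm: "mb l \<le> mumax" using mubar_le[OF l T] by (simp add: mb_def)
    have "mb l * W l t \<ge> (\<Sum>b\<in>UNIV. fb b l) * W l t"
      using fs W_nonneg by (simp add: mult_right_mono)
    also have "(\<Sum>b\<in>UNIV. fb b l) * W l t = (\<Sum>b\<in>UNIV. fb b l * W l t)"
      by (simp add: sum_distrib_right)
    also have "\<dots> \<ge> (\<Sum>b\<in>UNIV. fb b l * (Q (fst l) b t - Q (snd l) b t - \<gamma>))"
    proof (rule sum_mono)
      fix b
      have "Q (fst l) b t - Q (snd l) b t - \<gamma> \<le> W l t" using Wb_ge(1) W_ge order_trans by blast
      then show "fb b l * (Q (fst l) b t - Q (snd l) b t - \<gamma>) \<le> fb b l * W l t"
        using f0 by (simp add: mult_left_mono)
    qed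
    also have "(\<Sum>b\<in>UNIV. fb b l * (Q (fst l) b t - Q (snd l) b t - \<gamma>))
        = (\<Sum>b\<in>UNIV. fb b l * (Q (fst l) b t - Q (snd l) b t)) - \<gamma> * (\<Sum>b\<in>UNIV. fb b l)"
      by (simp add: right_diff_distrib sum_subtractf sum_distrib_left mult.commute)
    finally have "mb l * W l t \<ge> (\<Sum>b\<in>UNIV. fb b l * (Q (fst l) b t - Q (snd l) b t)) - \<gamma> * (\<Sum>b\<in>UNIV. fb b l)" .
    moreover have "\<gamma> * (\<Sum>b\<in>UNIV. fb b l) \<le> \<gamma> * mumax"
      using fs mm gam_nonneg by (intro mult_left_mono) auto
    ultimately show "(\<Sum>b\<in>UNIV. fb b l * (Q (fst l) b t - Q (snd l) b t)) - \<gamma> * mumax \<le> mb l * W l t"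
      by linarith
  qed
  then have f1: "(\<Sum>l\<in>Lk. mb l * W l t) \<ge> (\<Sum>l\<in>Lk. \<Sum>b\<in>UNIV. fb b l * (Q (fst l) b t - Q (snd l) b t)) - L * \<gamma> * mumax"
    by (simp add: sum_subtractf L_def)
  have "(\<Sum>l\<in>Lk. \<Sum>b\<in>UNIV. fb b l * (Q (fst l) b t - Q (snd l) b t))
      = (\<Sum>a\<in>UNIV. \<Sum>b\<in>UNIV. Q a b t * ((\<Sum>c\<in>Nout Lk a. fb b (a, c)) - (\<Sum>c\<in>Nin Lk a. fb b (c, a))))"
    by (rule flow_rearrange)
  also have "\<dots> \<ge> (\<Sum>a\<in>UNIV. \<Sum>b\<in>UNIV. Q a b t * r a b - Q a b t * err T r a b)"
  proof (intro sum_mono)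
    fix a b
    show "Q a b t * r a b - Q a b t * err T r a b
        \<le> Q a b t * ((\<Sum>c\<in>Nout Lk a. fb b (a, c)) - (\<Sum>c\<in>Nin Lk a. fb b (c, a)))"
    proof (cases "a = b")
      case True then show ?thesis using Qbb by simp
    next
      case False
      have "r a b - err T r a b \<le> ravg R' a b T - Q' a b T / real T"
        unfolding err_def by linarith
      then have "Q a b t * (r a b - err T r a b) \<le> Q a b t * (ravg R' a b T - Q' a b T / real T)"
        using Q_nonneg by (simp add: mult_left_mono)
      moreover have "(\<Sum>c\<in>Nout Lk a. fb b (a, c)) - (\<Sum>c\<in>Nin Lk a. fb b (c, a)) = ravg R' a b T - Q' a b T / real T"
        unfolding fb_def by (rule conserv[OF False T])
      ultimately show ?thesis by (simp add: right_diff_distrib)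
    qed
  qed
  finally have gh: "(\<Sum>l\<in>Lk. \<Sum>b\<in>UNIV. fb b l * (Q (fst l) b t - Q (snd l) b t)) \<ge> SQr - SE"
    by (simp add: SQr_def SE_def sum_subtractf)
  have ph: "Phi (Suc t) - Phi t = Q2 (Suc t) / 2 - Q2 t / 2 + (E2 (Suc t) / 2 - E2 t / 2)"
    by (simp add: Phi_def Q2_def E2_def)
  have B: "Bconst Lk Rmax mumax Pmax Kmax = real CARD('n)^2 * c + L * (Pmax + Kmax)^2 / 2"
    by (simp add: Bconst_eq c_def L_def)
  have g: "\<gamma> * real (card Lk) * mumax = L * \<gamma> * mumax" by (simp add: L_def)
  show ?thesis
    unfolding SUR_def[symmetric] SUr_def[symmetric] SE_def[symmetric] B g
    using a b cc de f1 gh ph by linarith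
qed

end


lemma stable_freq:
  fixes Q' :: "'n::finite \<Rightarrow> 'n \<Rightarrow> nat \<Rightarrow> real"
  assumes st: "stable Q'" and nn: "\<And>a b t. 0 \<le> Q' a b t" and eta: "\<eta> > 0"
  shows "\<exists>T\<ge>T0. (\<Sum>a\<in>UNIV. \<Sum>b\<in>UNIV. Q' a b T) < \<eta> * real T"
proof (rule ccontr)
  assume "\<not> ?thesis"
  then have big: "\<And>T. T \<ge> T0 \<Longrightarrow> (\<Sum>a\<in>UNIV. \<Sum>b\<in>UNIV. Q' a b T) \<ge> \<eta> * real T"
    by (meson not_less)
  define q where "q \<tau> = (\<Sum>a\<in>UNIV. \<Sum>b\<in>UNIV. Q' a b \<tau>)" for \<tau>
  have qn: "\<And>\<tau>. 0 \<le> q \<tau>" unfolding q_def using nn by (simp add: sum_nonneg)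
  have "limsup (\<lambda>t. ereal ((1 / real t) * (\<Sum>\<tau><t. q \<tau>))) < \<infinity>"
    using st unfolding stable_def q_def by simp
  then obtain n :: nat where "limsup (\<lambda>t. ereal ((1 / real t) * (\<Sum>\<tau><t. q \<tau>))) < ereal (real n)"
    using less_PInf_Ex_of_nat by (metis less_irrefl)
  then have "eventually (\<lambda>t. ereal ((1 / real t) * (\<Sum>\<tau><t. q \<tau>)) < ereal (real n)) sequentially"
    by (rule Limsup_lessD)
  then obtain N0 where N0: "\<And>t. t \<ge> N0 \<Longrightarrow> (1 / real t) * (\<Sum>\<tau><t. q \<tau>) < real n"
    unfolding eventually_sequentially by auto
  obtain k :: nat where k: "k \<ge> T0" "k \<ge> 1" "k \<ge> N0" "real k > 2 * real n / \<eta>"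
  proof -
    obtain m :: nat where m: "real m > 2 * real n / \<eta>" using reals_Archimedean2 by blast
    show ?thesis by (rule that[of "max (max T0 1) (max N0 m)"]) (use m in auto)
  qed
  have kp: "real k > 0" using k by simp
  have "(1 / real (2 * k)) * (\<Sum>\<tau><2 * k. q \<tau>) < real n" by (rule N0) (use k in auto)
  then have up: "(\<Sum>\<tau><2 * k. q \<tau>) < 2 * real k * real n" using kp by (simp add: field_simps)
  have "(\<Sum>\<tau>\<in>{k..<2 * k}. q \<tau>) \<le> (\<Sum>\<tau><2 * k. q \<tau>)"
    by (rule sum_mono2) (use qn in auto)
  moreover have "(\<Sum>\<tau>\<in>{k..<2 * k}. \<eta> * real k) \<le> (\<Sum>\<tau>\<in>{k..<2 * k}. q \<tau>)"
  proof (rule sum_mono)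
    fix \<tau> assume "\<tau> \<in> {k..<2 * k}"
    then have "\<tau> \<ge> k" "\<tau> \<ge> T0" using k by auto
    then have "\<eta> * real k \<le> \<eta> * real \<tau>" using eta by simp
    also have "\<dots> \<le> q \<tau>" using big[OF \<open>\<tau> \<ge> T0\<close>] by (simp add: q_def)
    finally show "\<eta> * real k \<le> q \<tau>" .
  qed
  moreover have "(\<Sum>\<tau>\<in>{k..<2 * k}. \<eta> * real k) = \<eta> * real k * real k" by simp
  ultimately have "\<eta> * real k * real k < 2 * real k * real n" using up by linarith
  then have "\<eta> * real k < 2 * real n" using kp by simp
  then have "real k < 2 * real n / \<eta>" using eta by (simp add: field_simps)
  then show False using k(4) by linarith
qed


lemma div_aux:
  fixes S u A b c V t :: real
  assumes t: "t > 0" and V: "V > 0" and h: "V * S \<ge> t * (V * u) - A / 2 - t * b - t * c"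
  shows "(1 / t) * S \<ge> u - A / (2 * t * V) - b / V - c / V"
proof -
  have e: "(1 / t) * S - (u - A / (2 * t * V) - b / V - c / V) = (V * S - (t * (V * u) - A / 2 - t * b - t * c)) / (t * V)"
    using t V by (simp add: field_simps)
  have "0 \<le> (V * S - (t * (V * u) - A / 2 - t * b - t * c)) / (t * V)"
    using h t V by (intro divide_nonneg_pos) auto
  then show ?thesis using e by linarith
qed

context cmp begin

lemma err_nonneg: "T > 0 \<Longrightarrow> 0 \<le> err T r a b"
  unfolding err_def using Q'_nonneg by simp

lemma Phi_nonneg: "0 \<le> Phi t"
  unfolding Phi_def by (intro add_nonneg_nonneg divide_nonneg_pos sum_nonneg) auto

lemma Phi0: "Phi 0 = real (card Lk) * \<theta>^2 / 2"
proof -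
  have "(\<Sum>l\<in>Lk. (E l 0 - \<theta>)^2) = (\<Sum>l\<in>Lk. \<theta>^2)"
    by (rule sum.cong) (auto simp: kd(1))
  then show ?thesis unfolding Phi_def by (simp add: Q0)
qed

lemma avg_bound:
  assumes T: "T > 0" and tau: "\<tau> > 0" and r: "\<And>a b. 0 \<le> r a b \<and> r a b \<le> Rmax"
  shows "(\<Sum>a\<in>UNIV. \<Sum>b\<in>UNIV. U a b (ravg R a b \<tau>)) \<ge>
     (\<Sum>a\<in>UNIV. \<Sum>b\<in>UNIV. U a b (r a b)) - real (card Lk) * \<theta>^2 / (2 * real \<tau> * V)
     - (Bconst Lk Rmax mumax Pmax Kmax + \<gamma> * real (card Lk) * mumax) / V
     - (V * \<beta> + \<gamma>) * (\<Sum>a\<in>UNIV. \<Sum>b\<in>UNIV. err T r a b) / V"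
proof -
  define SUR where "SUR t = (\<Sum>a\<in>UNIV. \<Sum>b\<in>UNIV. U a b (R a b t))" for t
  define SUr where "SUr = (\<Sum>a\<in>UNIV. \<Sum>b\<in>UNIV. U a b (r a b))"
  define SE where "SE t = (\<Sum>a\<in>UNIV. \<Sum>b\<in>UNIV. Q a b t * err T r a b)" for t
  define Bc where "Bc = Bconst Lk Rmax mumax Pmax Kmax + \<gamma> * real (card Lk) * mumax"
  define cX where "cX = (V * \<beta> + \<gamma>) * (\<Sum>a\<in>UNIV. \<Sum>b\<in>UNIV. err T r a b)"
  have sl: "V * SUR t \<ge> V * SUr + (Phi (Suc t) - Phi t) - Bc - SE t" for t
    unfolding SUR_def SUr_def SE_def Bc_def using slot[where r=r and t=t, OF T r] by linarith
  have se: "\<And>t. SE t \<le> cX"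
  proof -
    fix t
    have "SE t \<le> (\<Sum>a\<in>UNIV. \<Sum>b\<in>UNIV. (V * \<beta> + \<gamma>) * err T r a b)"
      unfolding SE_def by (intro sum_mono mult_right_mono Q_le err_nonneg[OF T])
    then show "SE t \<le> cX" by (simp add: cX_def sum_distrib_left)
  qed
  have "(\<Sum>t<\<tau>. V * SUr + (Phi (Suc t) - Phi t) - Bc - SE t) \<le> (\<Sum>t<\<tau>. V * SUR t)"
    by (rule sum_mono) (rule sl)
  moreover have "(\<Sum>t<\<tau>. V * SUr + (Phi (Suc t) - Phi t) - Bc - SE t)
       = real \<tau> * (V * SUr) + (Phi \<tau> - Phi 0) - real \<tau> * Bc - (\<Sum>t<\<tau>. SE t)"
    using sum_lessThan_telescope[of Phi \<tau>] by (simp add: sum.distrib sum_subtractf)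
  moreover have "(\<Sum>t<\<tau>. SE t) \<le> real \<tau> * cX"
    using sum_mono[of "{..<\<tau>}" SE "\<lambda>_. cX"] se by simp
  ultimately have "V * (\<Sum>t<\<tau>. SUR t) \<ge> real \<tau> * (V * SUr) - real (card Lk) * \<theta>^2 / 2 - real \<tau> * Bc - real \<tau> * cX"
    using Phi_nonneg[of \<tau>] Phi0 by (simp add: sum_distrib_left)
  then have main: "(1 / real \<tau>) * (\<Sum>t<\<tau>. SUR t) \<ge> SUr - real (card Lk) * \<theta>^2 / (2 * real \<tau> * V) - Bc / V - cX / V"
    using tau params(1) by (intro div_aux) auto
  have "(1 / real \<tau>) * (\<Sum>t<\<tau>. SUR t) = (\<Sum>a\<in>UNIV. \<Sum>b\<in>UNIV. (1 / real \<tau>) * (\<Sum>t<\<tau>. U a b (R a b t)))"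
    unfolding SUR_def by (simp add: sum_distrib_left sum.swap[of _ "{..<\<tau>}"])
  also have "\<dots> \<le> (\<Sum>a\<in>UNIV. \<Sum>b\<in>UNIV. U a b (ravg R a b \<tau>))"
    unfolding ravg_def by (intro sum_mono jensen_avg) (use concave tau Rb in auto)
  finally show ?thesis using main by (simp add: SUr_def Bc_def cX_def)
qed

end


lemma ravg_bounds:
  assumes "\<And>t. 0 \<le> f t \<and> f t \<le> c" "c \<ge> 0"
  shows "0 \<le> ravg (\<lambda>a b t. f t) a b \<tau> \<and> ravg (\<lambda>a b t. f t) a b \<tau> \<le> c"
proof (cases "\<tau> = 0")
  case True then show ?thesis using assms by (simp add: ravg_def)
next
  case False
  have "(\<Sum>t<\<tau>. f t) \<le> (\<Sum>t<\<tau>. c)" by (rule sum_mono) (use assms in auto)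
  moreover have "0 \<le> (\<Sum>t<\<tau>. f t)" by (rule sum_nonneg) (use assms in auto)
  ultimately show ?thesis using False by (simp add: ravg_def field_simps)
qed

context cmp begin

lemma r_bounds:
  assumes lim: "\<forall>a b. (\<lambda>\<tau>. ravg R' a b \<tau>) \<longlonglongrightarrow> r a b"
  shows "0 \<le> r a b \<and> r a b \<le> Rmax"
proof -
  have b: "0 \<le> ravg R' a b \<tau> \<and> ravg R' a b \<tau> \<le> Rmax" for \<tau>
    using ravg_bounds[of "R' a b" Rmax a b \<tau>] R'b params by (simp add: ravg_def)
  have "0 \<le> r a b" by (rule tendsto_lowerbound[OF lim[rule_format]]) (use b in auto)
  moreover have "r a b \<le> Rmax" by (rule tendsto_upperbound[OF lim[rule_format]]) (use b in auto)
  ultimately show ?thesis by simp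
qed

lemma Btilde_ge: "Bconst Lk Rmax mumax Pmax Kmax + \<gamma> * real (card Lk) * mumax \<le> Btilde Lk Rmax mumax Pmax Kmax"
proof -
  have "card Lk \<le> CARD('n) * dmax Lk" by (rule card_Lk_le)
  also have "\<dots> \<le> CARD('n)^2 * dmax Lk"
    by (simp add: power2_eq_square)
  finally have "real (card Lk) \<le> real CARD('n)^2 * d" by (metis of_nat_le_iff of_nat_mult of_nat_power)
  then have "\<gamma> * mumax * real (card Lk) \<le> \<gamma> * mumax * (real CARD('n)^2 * d)"
    using gam_nonneg params by (intro mult_left_mono) auto
  then show ?thesis by (simp add: Btilde_def \<gamma>_def algebra_simps)
qed

lemma cmp_main:
  assumes lim: "\<forall>a b. (\<lambda>\<tau>. ravg R' a b \<tau>) \<longlonglongrightarrow> r a b"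
  shows "ereal ((\<Sum>a\<in>UNIV. \<Sum>b\<in>UNIV. U a b (r a b)) - Btilde Lk Rmax mumax Pmax Kmax / V)
     \<le> liminf (\<lambda>\<tau>. ereal (\<Sum>a\<in>UNIV. \<Sum>b\<in>UNIV. U a b (ravg R a b \<tau>)))"
proof -
  define SUr where "SUr = (\<Sum>a\<in>UNIV. \<Sum>b\<in>UNIV. U a b (r a b))"
  define G where "G = SUr - Btilde Lk Rmax mumax Pmax Kmax / V"
  define f where "f \<tau> = (\<Sum>a\<in>UNIV. \<Sum>b\<in>UNIV. U a b (ravg R a b \<tau>))" for \<tau>
  define c0 where "c0 = V * \<beta> + \<gamma>"
  define Bc where "Bc = Bconst Lk Rmax mumax Pmax Kmax + \<gamma> * real (card Lk) * mumax"
  define L where "L = real (card Lk)"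
  have c0: "c0 \<ge> 0" using params beta_nonneg gam_nonneg by (simp add: c0_def)
  have V: "V > 0" using params by simp
  have rb: "\<And>a b. 0 \<le> r a b \<and> r a b \<le> Rmax" using r_bounds[OF lim] .
  have key: "\<forall>\<^sub>F \<tau> in sequentially. ereal y0 < ereal (f \<tau>)" if y0: "y0 < G" for y0
  proof -
    define \<epsilon> where "\<epsilon> = G - y0"
    have ep: "\<epsilon> > 0" using y0 by (simp add: \<epsilon>_def)
    define \<eta> where "\<eta> = \<epsilon> * V / (4 * (c0 + 1))"
    have eta: "\<eta> > 0" using ep V c0 by (simp add: \<eta>_def)
    have "((\<lambda>T. \<Sum>a\<in>UNIV. \<Sum>b\<in>UNIV. \<bar>r a b - ravg R' a b T\<bar>) \<longlongrightarrow> (\<Sum>a\<in>(UNIV::'n set). \<Sum>b\<in>(UNIV::'n set). \<bar>r a b - r a b\<bar>)) sequentially"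
      by (intro tendsto_sum tendsto_rabs tendsto_diff tendsto_const lim[rule_format])
    then have "((\<lambda>T. \<Sum>a\<in>UNIV. \<Sum>b\<in>UNIV. \<bar>r a b - ravg R' a b T\<bar>) \<longlongrightarrow> 0) sequentially" by simp
    from order_tendstoD(2)[OF this eta] obtain T1 where
      T1: "\<And>T. T \<ge> T1 \<Longrightarrow> (\<Sum>a\<in>UNIV. \<Sum>b\<in>UNIV. \<bar>r a b - ravg R' a b T\<bar>) < \<eta>"
      unfolding eventually_sequentially by blast
    obtain T where T: "T \<ge> max T1 1" "(\<Sum>a\<in>UNIV. \<Sum>b\<in>UNIV. Q' a b T) < \<eta> * real T"
      using stable_freq[OF Q'_stable Q'_nonneg eta] by blast
    have Tp: "T > 0" using T by simp
    have X: "(\<Sum>a\<in>UNIV. \<Sum>b\<in>UNIV. err T r a b) < 2 * \<eta>"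
    proof -
      have "(\<Sum>a\<in>UNIV. \<Sum>b\<in>UNIV. err T r a b)
          = (\<Sum>a\<in>UNIV. \<Sum>b\<in>UNIV. Q' a b T) / real T + (\<Sum>a\<in>UNIV. \<Sum>b\<in>UNIV. \<bar>r a b - ravg R' a b T\<bar>)"
        by (simp add: err_def sum.distrib sum_divide_distrib)
      moreover have "(\<Sum>a\<in>UNIV. \<Sum>b\<in>UNIV. Q' a b T) / real T < \<eta>"
        using T(2) Tp by (simp add: divide_less_eq)
      moreover have "(\<Sum>a\<in>UNIV. \<Sum>b\<in>UNIV. \<bar>r a b - ravg R' a b T\<bar>) < \<eta>" using T1 T(1) by simp
      ultimately show ?thesis by linarith
    qed
    have cX: "c0 * (\<Sum>a\<in>UNIV. \<Sum>b\<in>UNIV. err T r a b) / V < \<epsilon> / 2"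
    proof -
      have "c0 * (\<Sum>a\<in>UNIV. \<Sum>b\<in>UNIV. err T r a b) \<le> c0 * (2 * \<eta>)"
        using X c0 by (intro mult_left_mono) auto
      also have "\<dots> = \<epsilon> * V * c0 / (2 * (c0 + 1))" using c0 by (simp add: \<eta>_def field_simps)
      also have "\<dots> < \<epsilon> * V / 2"
      proof -
        have "c0 / (c0 + 1) < 1" using c0 by simp
        then have "(\<epsilon> * V / 2) * (c0 / (c0 + 1)) < (\<epsilon> * V / 2) * 1"
          using ep V by (intro mult_strict_left_mono) auto
        then show ?thesis by (simp add: field_simps)
      qed
      finally show ?thesis using V by (simp add: divide_less_eq)
    qed
    obtain m :: nat where m: "real m > L * \<theta>^2 / (\<epsilon> * V)" using reals_Archimedean2 by blast
    show ?thesis unfolding eventually_sequentially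
    proof (intro exI[of _ "Suc m"] allI impI)
      fix \<tau> assume tau: "\<tau> \<ge> Suc m"
      then have taup: "\<tau> > 0" by simp
      have "L * \<theta>^2 / (\<epsilon> * V) < real \<tau>" using m tau by linarith
      then have "L * \<theta>^2 < real \<tau> * (\<epsilon> * V)" using ep V by (simp add: divide_less_eq)
      then have th: "L * \<theta>^2 / (2 * real \<tau> * V) < \<epsilon> / 2" using taup V by (simp add: field_simps)
      have Bv: "Bc / V \<le> Btilde Lk Rmax mumax Pmax Kmax / V"
        using Btilde_ge V by (simp add: Bc_def divide_right_mono)
      have "f \<tau> \<ge> SUr - L * \<theta>^2 / (2 * real \<tau> * V) - Bc / V - c0 * (\<Sum>a\<in>UNIV. \<Sum>b\<in>UNIV. err T r a b) / V"
        using avg_bound[OF Tp taup rb] by (simp add: f_def SUr_def L_def Bc_def c0_def)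
      then have "f \<tau> > y0" using th cX Bv unfolding G_def \<epsilon>_def by argo
      then show "ereal y0 < ereal (f \<tau>)" by simp
    qed
  qed
  have "ereal G \<le> liminf (\<lambda>\<tau>. ereal (f \<tau>))"
    unfolding le_Liminf_iff
  proof (intro allI impI)
    fix y :: ereal assume y: "y < ereal G"
    show "\<forall>\<^sub>F \<tau> in sequentially. y < ereal (f \<tau>)"
    proof (cases y)
      case (real y0)
      then show ?thesis using key y by simp
    next
      case PInf then show ?thesis using y by simp
    next
      case MInf then show ?thesis by simp
    qed
  qed
  then show ?thesis by (simp add: G_def SUr_def f_def)
qed

end


context alg begin

lemma zero_achievable: "achievable Lk K mu Rmax Pmax (\<lambda>a b. 0)"
  unfolding achievable_def
proof (intro exI conjI)
  show "feasible_policy Lk K mu Rmax Pmax (\<lambda>l t. False) (\<lambda>l t. 0) (\<lambda>l t. 0) (\<lambda>a b t. 0) (\<lambda>b l t. 0) (\<lambda>a b t. 0)"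
    unfolding feasible_policy_def key_dyn_def queue_dyn_def stable_def
    using params mu_b by (auto simp: Limsup_const)
  show "\<forall>a b. (\<lambda>\<tau>. ravg (\<lambda>a b t. 0) a b \<tau>) \<longlonglongrightarrow> 0"
    by (simp add: ravg_def)
qed

lemma final:
  "ereal (Uopt Lk K mu Rmax Pmax U - Btilde Lk Rmax mumax Pmax Kmax / V)
     \<le> liminf (\<lambda>\<tau>. ereal (\<Sum>a\<in>UNIV. \<Sum>b\<in>UNIV. U a b (ravg R a b \<tau>)))"
proof -
  define LI where "LI = liminf (\<lambda>\<tau>. ereal (\<Sum>a\<in>UNIV. \<Sum>b\<in>UNIV. U a b (ravg R a b \<tau>)))"
  define A where "A = {r. achievable Lk K mu Rmax Pmax r}"
  define Bt where "Bt = Btilde Lk Rmax mumax Pmax Kmax"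
  have H: "ereal ((\<Sum>a\<in>UNIV. \<Sum>b\<in>UNIV. U a b (r a b)) - Bt / V) \<le> LI" if "r \<in> A" for r
  proof -
    from that obtain S' E' P' R' M' Q' where f: "feasible_policy Lk K mu Rmax Pmax S' E' P' R' M' Q'"
      and l: "\<forall>a b. (\<lambda>\<tau>. ravg R' a b \<tau>) \<longlonglongrightarrow> r a b"
      unfolding A_def achievable_def by blast
    have c: "cmp Lk K mu U dU0 V \<delta> \<beta> Rmax Pmax Kmax mumax S E P R Q M S' E' P' R' Q' M'"
      by (intro cmp.intro alg_axioms cmp_axioms.intro f)
    show ?thesis using cmp.cmp_main[OF c l] by (simp add: LI_def Bt_def)
  qed
  have z: "(\<lambda>a b. 0) \<in> A" using zero_achievable by (simp add: A_def)
  show ?thesis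
  proof (cases LI)
    case (real l)
    have "(SUP r\<in>A. \<Sum>a\<in>UNIV. \<Sum>b\<in>UNIV. U a b (r a b)) \<le> l + Bt / V"
    proof (rule cSUP_least)
      show "A \<noteq> {}" using z by blast
      fix r assume "r \<in> A"
      from H[OF this] real show "(\<Sum>a\<in>UNIV. \<Sum>b\<in>UNIV. U a b (r a b)) \<le> l + Bt / V" by simp
    qed
    then show ?thesis using real by (simp add: Uopt_def A_def Bt_def LI_def[symmetric])
  next
    case PInf then show ?thesis by (simp add: LI_def[symmetric])
  next
    case MInf then show ?thesis using H[OF z] by simp
  qed
qed

end

theorem theorem3:
  fixes Lk :: "('n::finite \<times> 'n) set"
    and K :: "'n \<times> 'n \<Rightarrow> real" and mu :: "'n \<times> 'n \<Rightarrow> real \<Rightarrow> real"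
    and U :: "'n \<Rightarrow> 'n \<Rightarrow> real \<Rightarrow> real" and dU0 :: "'n \<Rightarrow> 'n \<Rightarrow> real"
    and V \<delta> \<beta> Rmax Pmax Kmax mumax :: real
    and S :: "'n \<times> 'n \<Rightarrow> nat \<Rightarrow> bool" and E P :: "'n \<times> 'n \<Rightarrow> nat \<Rightarrow> real"
    and R Q :: "'n \<Rightarrow> 'n \<Rightarrow> nat \<Rightarrow> real" and M :: "'n \<Rightarrow> 'n \<times> 'n \<Rightarrow> nat \<Rightarrow> real"
  assumes links: "\<forall>(a, c)\<in>Lk. a \<noteq> c"
    and params: "V > 0" "\<delta> > 0" "Rmax \<ge> 0" "Pmax \<ge> 0" "Kmax \<ge> 0" "mumax \<ge> 0"
    and keygen: "\<forall>l\<in>Lk. 0 \<le> K l \<and> K l \<le> Kmax"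
    and rate: "\<forall>l\<in>Lk. \<forall>p\<in>{0..Pmax}. 0 \<le> mu l p \<and> mu l p \<le> mumax \<and> mu l p \<le> \<delta> * p"
    and concave: "\<forall>a b. concave_on {0..} (U a b)"
    and nondecr: "\<forall>a b. mono_on {0..} (U a b)"
    and deriv0: "\<forall>a b. (U a b has_real_derivative dU0 a b) (at 0 within {0..})"
    and beta: "\<beta> = Max (range (\<lambda>(a, b). dU0 a b))"
    and run: "algo_run Lk K mu U V \<delta> \<beta> Rmax Pmax mumax S E P R M Q"
  shows "ereal (Uopt Lk K mu Rmax Pmax U - Btilde Lk Rmax mumax Pmax Kmax / V)
           \<le> liminf (\<lambda>\<tau>. ereal (\<Sum>a\<in>UNIV. \<Sum>b\<in>UNIV. U a b (ravg R a b \<tau>)))"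
proof -
  have "alg Lk K mu U dU0 V \<delta> \<beta> Rmax Pmax Kmax mumax S E P R Q M"
    by (rule alg.intro) (rule params keygen rate concave nondecr deriv0 beta run)+
  then show ?thesis by (rule alg.final)
qed


end
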